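(* Let $\beta>1$, fix $\epsilon>0$ with $p_c-2\epsilon>0$, and let $n$ be such that $\log_2 n$, $k=n(p_c-2\epsilon)$ and $n(p_c-\epsilon)$ are integers. Set $w=l-\log_2 n$. Consider the following random code. Draw $\mathbf{G}$ uniformly from $\mathbb{F}_{2^w}^{k\times n}$. Let $\mathbf{U}_1,\dots,\mathbf{U}_N$, with $N=2^{kw}$, be the elements of $\mathbb{F}_{2^w}^k$, and for each $i$ set $\mathbf{V}_i=\mathbf{G}^{\mathrm T}\mathbf{U}_i$. Form $\mathbf{X}_i\in\mathbb{F}_2^{n\times l}$ by taking, for each $r\in[n]$, its $r$-th row to be the binary expansion of $(\mathbf{V}_i)_r$ followed by the address $\alpha(r)$. Decode $\mathbf{Z}$ as follows. If there is a unique $i\in[N]$ with $|\mathbf{X}_i\cap\mathbf{Z}|\ge n(p_c-\epsilon)$, output $\widehat{\mathbf{U}}=\mathbf{U}_i$; otherwise declare failure. Then, when $\mathbf{X}_1$ is transmitted over the outer channel, the error probability, averaged over $\mathbf{G}$ and the channel, satisfies $$\mathbb{P}(\widehat{\mathbf{U}}\ne\mathbf{U}_1)\le e^{-2n\epsilon^2}+2^{\,n-n\epsilon w}=e^{-2n\epsilon^2}+2^{\,n-n\epsilon(\beta-1)\log_2 n},$$ which tends to $0$ as $n\to\infty$.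
   Context: The outer channel takes as input a binary matrix $\mathbf{X}\in\mathbb{F}_2^{n\times l}$ with rows $\mathbf{x}_1,\dots,\mathbf{x}_n$ and acts in two stages. Channel-1 acts independently on each row and outputs $\mathbf{y}_i$, where - $\mathbf{y}_i=\mathbf{x}_i$ with probability $p_c$; - $\mathbf{y}_i=?$ (an erased row) with probability $p_e$; - $\mathbf{y}_i=\mathbf{e}$ with probability $p_s/(2^l-1)$ for each $\mathbf{e}\in\mathbb{F}_2^l\setminus\{\mathbf{x}_i\}$. Here $p_c+p_e+p_s=1$. Channel-2 takes the $n$-row matrix $\mathbf{Y}$ (erased rows kept as "?") and outputs $\mathbf{Z}$, a uniformly random permutation of its rows (each of the $n!$ permutations has probability $1/n!$). We set $\beta=l/\log_2 n$. The map $\alpha:[n]\to\mathbb{F}_2^{\log_2 n}$ is a fixed bijection (the address map). $\mathbf{X}\cap\mathbf{Z}$ denotes the intersection of the sets of non-erased row vectors of $\mathbf{X}$ and of $\mathbf{Z}$. *)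

theory Defs
  imports "HOL-Analysis.Analysis" "HOL-Combinatorics.Permutations"
begin

definition msgs :: "nat \<Rightarrow> (nat \<Rightarrow> 'f) set" where
  "msgs k = {..<k} \<rightarrow>\<^sub>E (UNIV :: 'f set)"

definition genmats :: "nat \<Rightarrow> nat \<Rightarrow> (nat \<times> nat \<Rightarrow> 'f) set" where
  "genmats k n = ({..<k} \<times> {..<n}) \<rightarrow>\<^sub>E (UNIV :: 'f set)"

definition codeword ::
  "nat \<Rightarrow> ('f::field \<Rightarrow> bool list) \<Rightarrow> (nat \<Rightarrow> bool list) \<Rightarrow> (nat \<times> nat \<Rightarrow> 'f)
    \<Rightarrow> (nat \<Rightarrow> 'f) \<Rightarrow> nat \<Rightarrow> bool list" where
  "codeword k bexp \<alpha> G u r = bexp (\<Sum>j<k. G (j, r) * u j) @ \<alpha> r"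

definition rowset :: "(nat \<Rightarrow> bool list) \<Rightarrow> nat \<Rightarrow> bool list set" where
  "rowset X n = X ` {..<n}"

text \<open>Set of non-erased rows of a channel output (None = erased row '?').\<close>
definition nonerased :: "bool list option list \<Rightarrow> bool list set" where
  "nonerased Z = {y. Some y \<in> set Z}"

definition outputs :: "nat \<Rightarrow> nat \<Rightarrow> bool list option list set" where
  "outputs l n = {Y. length Y = n \<and> (\<forall>y\<in>set Y. y = None \<or> (\<exists>e. y = Some e \<and> length e = l))}"

definition row_trans :: "nat \<Rightarrow> real \<Rightarrow> real \<Rightarrow> real \<Rightarrow> bool list \<Rightarrow> bool list option \<Rightarrow> real" where
  "row_trans l pc pe ps x y = (case y of None \<Rightarrow> pe
      | Some e \<Rightarrow> if e = x then pc else if length e = l then ps / (2 ^ l - 1) else 0)"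

definition channel1 :: "nat \<Rightarrow> nat \<Rightarrow> real \<Rightarrow> real \<Rightarrow> real \<Rightarrow> (nat \<Rightarrow> bool list)
    \<Rightarrow> bool list option list \<Rightarrow> real" where
  "channel1 l n pc pe ps X Y = (\<Prod>r<n. row_trans l pc pe ps (X r) (Y ! r))"

definition permute_rows :: "nat \<Rightarrow> (nat \<Rightarrow> nat) \<Rightarrow> 'a list \<Rightarrow> 'a list" where
  "permute_rows n \<sigma> Y = map (\<lambda>j. Y ! \<sigma> j) [0..<n]"

definition decode :: "nat \<Rightarrow> nat \<Rightarrow> nat \<Rightarrow> ('f::field \<Rightarrow> bool list) \<Rightarrow> (nat \<Rightarrow> bool list)
    \<Rightarrow> (nat \<times> nat \<Rightarrow> 'f) \<Rightarrow> bool list option list \<Rightarrow> (nat \<Rightarrow> 'f) option" where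
  "decode k n t bexp \<alpha> G Z =
     (if \<exists>!u. u \<in> msgs k \<and> t \<le> card (rowset (codeword k bexp \<alpha> G u) n \<inter> nonerased Z)
      then Some (THE u. u \<in> msgs k \<and> t \<le> card (rowset (codeword k bexp \<alpha> G u) n \<inter> nonerased Z))
      else None)"

end

theory Submission
  imports Defs "HOL-Probability.Hoeffding" "HOL-Real_Asymp.Real_Asymp"
begin


lemma list_prod_sum:
  fixes f :: "nat \<Rightarrow> 'a \<Rightarrow> real"
  assumes fin: "finite R"
  shows "(\<Sum>Y\<in>{Y. length Y = n \<and> set Y \<subseteq> R}. \<Prod>r<n. f r (Y!r)) = (\<Prod>r<n. \<Sum>y\<in>R. f r y)"
proof (induction n arbitrary: f)
  case 0
  have "{Y. length Y = 0 \<and> set Y \<subseteq> R} = {[]}" by auto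
  then show ?case by simp
next
  case (Suc n)
  let ?L = "{Y. length Y = n \<and> set Y \<subseteq> R}"
  have eq: "{Y. length Y = Suc n \<and> set Y \<subseteq> R} = (\<lambda>(y,Y'). y#Y') ` (R \<times> ?L)"
  proof (rule set_eqI, rule iffI)
    fix Y assume "Y \<in> {Y. length Y = Suc n \<and> set Y \<subseteq> R}"
    then obtain y Y' where "Y = y # Y'" "length Y' = n" "y \<in> R" "set Y' \<subseteq> R"
      by (cases Y) auto
    then show "Y \<in> (\<lambda>(y,Y'). y#Y') ` (R \<times> ?L)" by force
  qed auto
  have inj: "inj_on (\<lambda>(y,Y'). y#Y') (R \<times> ?L)" by (auto simp: inj_on_def)
  have "(\<Sum>Y\<in>{Y. length Y = Suc n \<and> set Y \<subseteq> R}. \<Prod>r<Suc n. f r (Y!r))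
      = (\<Sum>p\<in>R \<times> ?L. \<Prod>r<Suc n. f r ((fst p # snd p)!r))"
    unfolding eq by (subst sum.reindex[OF inj]) (simp add: case_prod_beta)
  also have "\<dots> = (\<Sum>p\<in>R \<times> ?L. f 0 (fst p) * (\<Prod>r<n. f (Suc r) (snd p ! r)))"
    by (simp only: prod.lessThan_Suc_shift nth_Cons_0 nth_Cons_Suc)
  also have "\<dots> = (\<Sum>y\<in>R. \<Sum>Y\<in>?L. f 0 y * (\<Prod>r<n. f (Suc r) (Y ! r)))"
    by (simp add: sum.cartesian_product case_prod_beta)
  also have "\<dots> = (\<Sum>y\<in>R. f 0 y) * (\<Sum>Y\<in>?L. \<Prod>r<n. f (Suc r) (Y ! r))"
    by (simp add: sum_product)
  also have "\<dots> = (\<Sum>y\<in>R. f 0 y) * (\<Prod>r<n. \<Sum>y\<in>R. f (Suc r) y)"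
    using Suc[of "\<lambda>r. f (Suc r)"] by simp
  also have "\<dots> = (\<Prod>r<Suc n. \<Sum>y\<in>R. f r y)"
    by (simp only: prod.lessThan_Suc_shift)
  finally show ?case .
qed

definition Rw :: "nat \<Rightarrow> bool list option set" where
  "Rw l = insert None (Some ` {e. length e = l})"

lemma finite_len: "finite {e::bool list. length e = l}"
  using finite_lists_length_eq[of "UNIV::bool set" l] by simp

lemma card_len: "card {e::bool list. length e = l} = 2 ^ l"
  using card_lists_length_eq[of "UNIV::bool set" l] by simp

lemma finite_Rw: "finite (Rw l)"
  unfolding Rw_def using finite_len by simp

lemma outputs_eq: "outputs l n = {Y. length Y = n \<and> set Y \<subseteq> Rw l}"
  unfolding outputs_def Rw_def by (auto; metis option.exhaust)

lemma sum_Rw: "(\<Sum>y\<in>Rw l. f y) = f None + (\<Sum>e\<in>{e. length e = l}. f (Some e))"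
  unfolding Rw_def using finite_len
  by (subst sum.insert) (auto simp: sum.reindex)

lemma row_sum_Some:
  assumes "R \<subseteq> {e. length e = l}" "finite R"
  shows "(\<Sum>e\<in>R. row_trans l pc pe ps x (Some e))
     = (if x \<in> R then pc else 0) + ps / (2 ^ l - 1) * real (card (R - {x}))"
proof -
  have "(\<Sum>e\<in>R. row_trans l pc pe ps x (Some e)) = (\<Sum>e\<in>R. if e = x then pc else ps / (2 ^ l - 1))"
    using assms(1) by (intro sum.cong) (auto simp: row_trans_def)
  also have "\<dots> = (if x \<in> R then pc else 0) + ps / (2 ^ l - 1) * real (card (R - {x}))"
  proof (cases "x \<in> R")
    case True
    then show ?thesis using assms(2)
      by (simp add: sum.remove[of R x] sum.cong[of "R - {x}" "R - {x}" _ "\<lambda>_. ps / (2 ^ l - 1)"])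
  next
    case False
    then have "R - {x} = R" by auto
    have "(\<Sum>e\<in>R. if e = x then pc else ps / (2 ^ l - 1)) = (\<Sum>e\<in>R. ps / (2 ^ l - 1))"
      using False by (intro sum.cong) auto
    then show ?thesis using False \<open>R - {x} = R\<close> by simp
  qed
  finally show ?thesis .
qed

lemma row_total:
  assumes "length x = l" "l \<ge> 1" "pc + pe + ps = 1"
  shows "(\<Sum>y\<in>Rw l. row_trans l pc pe ps x y) = 1"
proof -
  have c: "card ({e::bool list. length e = l} - {x}) = 2 ^ l - 1"
    using assms(1) finite_len by (simp add: card_len)
  have "(2::real) ^ l \<ge> 2" using assms(2)
    by (metis power_one_right power_increasing one_le_numeral)
  then have ne: "(2::real) ^ l - 1 \<noteq> 0" by simp
  have "real (2 ^ l - 1 :: nat) = 2 ^ l - 1"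
    by (simp add: of_nat_diff)
  then show ?thesis
    unfolding sum_Rw using row_sum_Some[of "{e. length e = l}" l pc pe ps x] finite_len assms c ne
    by (simp add: row_trans_def)
qed

lemma row_correct:
  assumes "length x = l" "l \<ge> 1" "pc + pe + ps = 1"
  shows "(\<Sum>y\<in>Rw l. row_trans l pc pe ps x y * (if (y = Some x) = b then 1 else 0))
       = (if b then pc else 1 - pc)"
proof -
  have xin: "Some x \<in> Rw l" using assms(1) by (simp add: Rw_def)
  have one: "(\<Sum>y\<in>Rw l. row_trans l pc pe ps x y * (if y = Some x then 1 else 0)) = pc"
  proof -
    have "(\<Sum>y\<in>Rw l. row_trans l pc pe ps x y * (if y = Some x then 1 else 0))
       = (\<Sum>y\<in>Rw l. if Some x = y then row_trans l pc pe ps x y else 0)"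
      by (intro sum.cong) auto
    also have "\<dots> = pc" using xin finite_Rw by (subst sum.delta') (auto simp: row_trans_def)
    finally show ?thesis .
  qed
  show ?thesis
  proof (cases b)
    case True then show ?thesis using one by simp
  next
    case False
    have "(\<Sum>y\<in>Rw l. row_trans l pc pe ps x y) = (\<Sum>y\<in>Rw l. row_trans l pc pe ps x y * (if y = Some x then 1 else 0))
        + (\<Sum>y\<in>Rw l. row_trans l pc pe ps x y * (if y \<noteq> Some x then 1 else 0))"
      by (subst sum.distrib[symmetric]) (intro sum.cong, auto)
    then show ?thesis using False one row_total[OF assms] by simp
  qed
qed



lemma prod_indicator_eq:
  fixes n :: nat
  assumes "S \<subseteq> {..<n}"
  shows "(\<Prod>r<n. (if P r = (r \<in> S) then 1 else 0::real)) = (if {r\<in>{..<n}. P r} = S then 1 else 0)"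
proof (cases "{r\<in>{..<n}. P r} = S")
  case True
  then show ?thesis by (auto intro!: prod.neutral)
next
  case False
  then obtain r where "r < n" "P r \<noteq> (r \<in> S)" using assms by auto
  have "(\<Prod>r<n. (if P r = (r \<in> S) then 1 else 0::real)) = 0"
  proof (rule prod_zero)
    show "\<exists>a\<in>{..<n}. (if P a = (a \<in> S) then 1 else 0::real) = 0"
      using \<open>r < n\<close> \<open>P r \<noteq> (r \<in> S)\<close> by (intro bexI[of _ r]) auto
  qed simp
  then show ?thesis using False by simp
qed

lemma partA:
  fixes X :: "nat \<Rightarrow> bool list"
  assumes probs: "pc \<ge> 0" "pe \<ge> 0" "ps \<ge> 0" "pc + pe + ps = 1"
    and l1: "l \<ge> 1" and lens: "\<And>r. r < n \<Longrightarrow> length (X r) = l"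
    and npos: "n > 0" and eps: "\<epsilon> > 0" and t_def: "real t = real n * (pc - \<epsilon>)"
  shows "(\<Sum>Y\<in>outputs l n. channel1 l n pc pe ps X Y
          * (if card {r\<in>{..<n}. Y!r = Some (X r)} < t then 1 else 0)) \<le> exp (- 2 * real n * \<epsilon>\<^sup>2)"
proof -
  define C where "C Y = {r\<in>{..<n}. Y!r = Some (X r)}" for Y
  define F where "F = {S. S \<subseteq> {..<n} \<and> card S < t}"
  have finF: "finite F" unfolding F_def by (rule finite_subset[of _ "Pow {..<n}"]) auto
  have ind: "(if card (C Y) < t then 1 else 0::real)
       = (\<Sum>S\<in>F. \<Prod>r<n. (if (Y!r = Some (X r)) = (r \<in> S) then 1 else 0))" for Y
  proof -
    have "(\<Sum>S\<in>F. \<Prod>r<n. (if (Y!r = Some (X r)) = (r \<in> S) then 1 else 0::real))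
        = (\<Sum>S\<in>F. if C Y = S then 1 else 0)"
      by (intro sum.cong refl, subst prod_indicator_eq) (auto simp: F_def C_def)
    also have "\<dots> = (if C Y \<in> F then 1 else 0)" using finF by (simp add: sum.delta)
    also have "\<dots> = (if card (C Y) < t then 1 else 0)" by (auto simp: F_def C_def)
    finally show ?thesis by simp
  qed
  have "(\<Sum>Y\<in>outputs l n. channel1 l n pc pe ps X Y * (if card (C Y) < t then 1 else 0))
     = (\<Sum>S\<in>F. \<Sum>Y\<in>outputs l n. \<Prod>r<n. row_trans l pc pe ps (X r) (Y!r)
           * (if (Y!r = Some (X r)) = (r \<in> S) then 1 else 0))"
    unfolding ind channel1_def
    by (subst sum.swap) (simp add: sum_distrib_left prod.distrib)
  also have "\<dots> = (\<Sum>S\<in>F. \<Prod>r<n. \<Sum>y\<in>Rw l. row_trans l pc pe ps (X r) y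
           * (if (y = Some (X r)) = (r \<in> S) then 1 else 0))"
    unfolding outputs_eq by (intro sum.cong refl list_prod_sum finite_Rw)
  also have "\<dots> = (\<Sum>S\<in>F. \<Prod>r<n. (if r \<in> S then pc else 1 - pc))"
    using row_correct[OF lens l1 probs(4)] by (intro sum.cong refl prod.cong) auto
  also have "\<dots> = (\<Sum>S\<in>F. pc ^ card S * (1 - pc) ^ (n - card S))"
  proof (intro sum.cong refl)
    fix S assume "S \<in> F"
    then have S: "S \<subseteq> {..<n}" by (simp add: F_def)
    have "{..<n} \<inter> {x. x \<in> S} = S" using S by auto
    moreover have "{..<n} \<inter> - {x. x \<in> S} = {..<n} - S" by auto
    moreover have "card ({..<n} - S) = n - card S" using S by (simp add: card_Diff_subset finite_subset)
    ultimately show "(\<Prod>r<n. (if r \<in> S then pc else 1 - pc)) = pc ^ card S * (1 - pc) ^ (n - card S)"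
      by (simp add: prod.If_cases)
  qed
  also have "\<dots> = (\<Sum>j\<in>{..<t}. \<Sum>S\<in>{S\<in>F. card S = j}. pc ^ card S * (1 - pc) ^ (n - card S))"
    using finF by (subst sum.group[symmetric, of F "{..<t}" card]) (auto simp: F_def)
  also have "\<dots> = (\<Sum>j\<in>{..<t}. real (n choose j) * pc ^ j * (1 - pc) ^ (n - j))"
  proof (intro sum.cong refl)
    fix j assume "j \<in> {..<t}"
    then have "{S\<in>F. card S = j} = {S. S \<subseteq> {..<n} \<and> card S = j}" by (auto simp: F_def)
    then show "(\<Sum>S\<in>{S\<in>F. card S = j}. pc ^ card S * (1 - pc) ^ (n - card S))
       = real (n choose j) * pc ^ j * (1 - pc) ^ (n - j)"
      by (simp add: n_subsets)
  qed
  also have "\<dots> = measure_pmf.prob (binomial_pmf n pc) {..<t}"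
    using probs by (simp add: measure_measure_pmf_finite)
  also have "\<dots> \<le> measure_pmf.prob (binomial_pmf n pc) {x. real x / real n \<le> pc - \<epsilon>}"
  proof (rule measure_pmf.finite_measure_mono)
    show "{..<t} \<subseteq> {x. real x / real n \<le> pc - \<epsilon>}"
    proof
      fix x assume "x \<in> {..<t}"
      then have "real x \<le> real n * (pc - \<epsilon>)" using t_def by simp
      then show "x \<in> {x. real x / real n \<le> pc - \<epsilon>}" using npos by (simp add: field_simps)
    qed
  qed simp
  also have "\<dots> \<le> exp (- 2 * real n * \<epsilon>\<^sup>2)"
  proof -
    have bd: "binomial_distribution pc" using probs by unfold_locales auto
    show ?thesis using binomial_distribution.prob_le'[OF bd npos, of \<epsilon>] eps by simp
  qed
  finally show ?thesis unfolding C_def .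
qed



lemma sum_Some_R:
  fixes f :: "bool list option \<Rightarrow> real"
  assumes "R \<subseteq> {e. length e = l}" "finite R"
  shows "(\<Sum>y\<in>Rw l. f y * (if y \<in> Some ` R then 1 else 0)) = (\<Sum>e\<in>R. f (Some e))"
proof -
  have "(\<Sum>y\<in>Rw l. f y * (if y \<in> Some ` R then 1 else 0)) = (\<Sum>y\<in>Rw l \<inter> Some ` R. f y)"
  proof -
    have "(\<Sum>y\<in>Rw l. f y * (if y \<in> Some ` R then 1 else 0)) = (\<Sum>y\<in>Rw l. if y \<in> Some ` R then f y else 0)"
      by (intro sum.cong) auto
    then show ?thesis using finite_Rw by (simp add: sum.inter_restrict)
  qed
  also have "Rw l \<inter> Some ` R = Some ` R" using assms(1) by (auto simp: Rw_def)
  also have "(\<Sum>y\<in>Some ` R. f y) = (\<Sum>e\<in>R. f (Some e))" by (simp add: sum.reindex)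
  finally show ?thesis .
qed

lemma partB_Y:
  fixes X :: "nat \<Rightarrow> bool list"
  assumes probs: "pc \<ge> 0" "pe \<ge> 0" "ps \<ge> 0" "pc + pe + ps = 1"
    and l1: "l \<ge> 1" and lens: "\<And>r. r < n \<Longrightarrow> length (X r) = l"
    and Rsub: "R \<subseteq> {e. length e = l}" and finR: "finite R"
  shows "(\<Sum>Y\<in>outputs l n. channel1 l n pc pe ps X Y
          * (if t \<le> card (R \<inter> nonerased Y) then 1 else 0))
     \<le> (\<Sum>S\<in>{S. S \<subseteq> {..<n} \<and> card S = t}. \<Prod>r\<in>S. \<Sum>e\<in>R. row_trans l pc pe ps (X r) (Some e))"
proof -
  define T where "T = {S. S \<subseteq> {..<n} \<and> card S = t}"
  have finT: "finite T" unfolding T_def by (rule finite_subset[of _ "Pow {..<n}"]) auto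
  have rt_nn: "row_trans l pc pe ps x y \<ge> 0" for x y
  proof -
    have "(2::real) ^ l \<ge> 1" by simp
    then show ?thesis using probs by (auto simp: row_trans_def split: option.split)
  qed
  have ch_nn: "channel1 l n pc pe ps X Y \<ge> 0" for Y
    unfolding channel1_def by (intro prod_nonneg) (simp add: rt_nn)
  have ind: "(if t \<le> card (R \<inter> nonerased Y) then 1 else 0::real)
      \<le> (\<Sum>S\<in>T. \<Prod>r\<in>S. (if Y!r \<in> Some ` R then 1 else 0))" if Y: "Y \<in> outputs l n" for Y
  proof (cases "t \<le> card (R \<inter> nonerased Y)")
    case True
    define I where "I = {r\<in>{..<n}. Y!r \<in> Some ` R}"
    have len: "length Y = n" using Y by (simp add: outputs_def)
    have "R \<inter> nonerased Y \<subseteq> (\<lambda>r. the (Y!r)) ` I"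
    proof
      fix e assume "e \<in> R \<inter> nonerased Y"
      then have "e \<in> R" "Some e \<in> set Y" by (auto simp: nonerased_def)
      then obtain r where "r < n" "Y!r = Some e" using len by (auto simp: in_set_conv_nth)
      then show "e \<in> (\<lambda>r. the (Y!r)) ` I" using \<open>e \<in> R\<close> unfolding I_def by force
    qed
    moreover have finI: "finite I" unfolding I_def by simp
    ultimately have "card (R \<inter> nonerased Y) \<le> card ((\<lambda>r. the (Y!r)) ` I)"
      by (intro card_mono finite_imageI)
    also have "\<dots> \<le> card I" using finI by (rule card_image_le)
    finally have "card (R \<inter> nonerased Y) \<le> card I" .
    then have tI: "t \<le> card I" using True by linarith
    obtain S where S: "S \<subseteq> I" "card S = t" "finite S"
      by (rule obtain_subset_with_card_n[OF tI])
    have ST: "S \<in> T" using S unfolding T_def I_def by auto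
    have one: "(\<Prod>r\<in>S. (if Y!r \<in> Some ` R then 1 else 0::real)) = 1"
      using S unfolding I_def by (intro prod.neutral) auto
    have "(1::real) \<le> (\<Sum>S\<in>T. \<Prod>r\<in>S. (if Y!r \<in> Some ` R then 1 else 0))"
      using member_le_sum[OF ST, of "\<lambda>S. \<Prod>r\<in>S. (if Y!r \<in> Some ` R then 1 else 0::real)"] finT one
      by (simp add: prod_nonneg)
    then show ?thesis using True by simp
  next
    case False
    then show ?thesis by (simp add: sum_nonneg prod_nonneg)
  qed
  have "(\<Sum>Y\<in>outputs l n. channel1 l n pc pe ps X Y * (if t \<le> card (R \<inter> nonerased Y) then 1 else 0))
     \<le> (\<Sum>Y\<in>outputs l n. channel1 l n pc pe ps X Y * (\<Sum>S\<in>T. \<Prod>r\<in>S. (if Y!r \<in> Some ` R then 1 else 0)))"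
    by (intro sum_mono mult_left_mono ind ch_nn)
  also have "\<dots> = (\<Sum>S\<in>T. \<Sum>Y\<in>outputs l n. \<Prod>r<n. row_trans l pc pe ps (X r) (Y!r)
       * (if r \<in> S then (if Y!r \<in> Some ` R then 1 else 0) else 1))"
  proof -
    have eqS: "(\<Prod>r\<in>S. (if Y!r \<in> Some ` R then 1 else 0::real))
        = (\<Prod>r<n. (if r \<in> S then (if Y!r \<in> Some ` R then 1 else 0) else 1))" if "S \<in> T" for S Y
    proof -
      have eq: "{..<n} \<inter> S = S" using that by (auto simp: T_def)
      from prod.inter_restrict[OF finite_lessThan, of "\<lambda>r. (if Y!r \<in> Some ` R then 1 else 0::real)" n S] eq
      show ?thesis by simp
    qed
    have inner: "(\<Sum>S\<in>T. \<Prod>r\<in>S. (if Y!r \<in> Some ` R then 1 else 0::real))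
       = (\<Sum>S\<in>T. \<Prod>r<n. (if r \<in> S then (if Y!r \<in> Some ` R then 1 else 0) else 1))" for Y
      by (intro sum.cong refl eqS)
    have "(\<Sum>Y\<in>outputs l n. channel1 l n pc pe ps X Y * (\<Sum>S\<in>T. \<Prod>r\<in>S. (if Y!r \<in> Some ` R then 1 else 0)))
      = (\<Sum>Y\<in>outputs l n. \<Sum>S\<in>T. channel1 l n pc pe ps X Y * (\<Prod>r<n. (if r \<in> S then (if Y!r \<in> Some ` R then 1 else 0) else 1)))"
      by (simp only: inner sum_distrib_left)
    also have "\<dots> = (\<Sum>S\<in>T. \<Sum>Y\<in>outputs l n. channel1 l n pc pe ps X Y * (\<Prod>r<n. (if r \<in> S then (if Y!r \<in> Some ` R then 1 else 0) else 1)))"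
      by (rule sum.swap)
    finally show ?thesis unfolding channel1_def by (simp only: prod.distrib)
  qed
  also have "\<dots> = (\<Sum>S\<in>T. \<Prod>r<n. \<Sum>y\<in>Rw l. row_trans l pc pe ps (X r) y
       * (if r \<in> S then (if y \<in> Some ` R then 1 else 0) else 1))"
    unfolding outputs_eq by (intro sum.cong refl list_prod_sum finite_Rw)
  also have "\<dots> = (\<Sum>S\<in>T. \<Prod>r<n. (if r \<in> S then (\<Sum>e\<in>R. row_trans l pc pe ps (X r) (Some e)) else 1))"
  proof (intro sum.cong refl prod.cong)
    fix S r assume "r \<in> {..<n}"
    show "(\<Sum>y\<in>Rw l. row_trans l pc pe ps (X r) y * (if r \<in> S then (if y \<in> Some ` R then 1 else 0) else 1))
       = (if r \<in> S then (\<Sum>e\<in>R. row_trans l pc pe ps (X r) (Some e)) else 1)"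
    proof (cases "r \<in> S")
      case True then show ?thesis using sum_Some_R[OF Rsub finR] by simp
    next
      case False then show ?thesis using row_total[OF lens l1 probs(4)] \<open>r \<in> {..<n}\<close> by simp
    qed
  qed
  also have "\<dots> = (\<Sum>S\<in>T. \<Prod>r\<in>S. \<Sum>e\<in>R. row_trans l pc pe ps (X r) (Some e))"
  proof (intro sum.cong refl)
    fix S assume "S \<in> T"
    then have eq: "{..<n} \<inter> S = S" by (auto simp: T_def)
    from prod.inter_restrict[OF finite_lessThan, of "\<lambda>r. \<Sum>e\<in>R. row_trans l pc pe ps (X r) (Some e)" n S] eq
    show "(\<Prod>r<n. (if r \<in> S then (\<Sum>e\<in>R. row_trans l pc pe ps (X r) (Some e)) else 1))
       = (\<Prod>r\<in>S. \<Sum>e\<in>R. row_trans l pc pe ps (X r) (Some e))"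
      by simp
  qed
  finally show ?thesis unfolding T_def .
qed



lemma sum_remove_j0:
  fixes c d :: "nat \<Rightarrow> 'f::field"
  assumes "j0 < k"
  shows "(\<Sum>j<k. c j * d j) = c j0 * d j0 + (\<Sum>j\<in>{..<k} - {j0}. c j * d j)"
  using assms by (subst sum.remove[of _ j0]) auto

lemma col_count:
  fixes d :: "nat \<Rightarrow> 'f::{field,finite}"
  assumes j0: "j0 < k" "d j0 \<noteq> 0"
  shows "card {c \<in> msgs k. (\<Sum>j<k. c j * d j) = v} = CARD('f) ^ (k - 1)"
proof -
  define K where "K = {..<k} - {j0}"
  define g where "g c' = c'(j0 := (v - (\<Sum>j\<in>K. c' j * d j)) / d j0)" for c' :: "nat \<Rightarrow> 'f"
  have bij: "bij_betw (\<lambda>c. restrict c K) {c \<in> msgs k. (\<Sum>j<k. c j * d j) = v} (K \<rightarrow>\<^sub>E (UNIV::'f set))"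
  proof (rule bij_betw_byWitness[where f'=g])
    show "\<forall>a\<in>{c \<in> msgs k. (\<Sum>j<k. c j * d j) = v}. g (restrict a K) = a"
    proof
      fix c assume c: "c \<in> {c \<in> msgs k. (\<Sum>j<k. c j * d j) = v}"
      then have ext: "c \<in> extensional {..<k}" and L: "(\<Sum>j<k. c j * d j) = v"
        by (auto simp: msgs_def PiE_def)
      have "(\<Sum>j\<in>K. restrict c K j * d j) = (\<Sum>j\<in>K. c j * d j)" by simp
      moreover have "v = c j0 * d j0 + (\<Sum>j\<in>K. c j * d j)"
        using L sum_remove_j0[OF j0(1), of c d] by (simp add: K_def)
      ultimately have x: "(v - (\<Sum>j\<in>K. restrict c K j * d j)) / d j0 = c j0"
        using j0(2) by simp
      show "g (restrict c K) = c"
      proof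
        fix j show "g (restrict c K) j = c j"
          using x ext by (cases "j = j0") (auto simp: g_def K_def extensional_def)
      qed
    qed
    show "\<forall>a\<in>K \<rightarrow>\<^sub>E UNIV. restrict (g a) K = a"
      by (auto simp: g_def K_def PiE_def extensional_def restrict_def fun_eq_iff)
    show "(\<lambda>c. restrict c K) ` {c \<in> msgs k. (\<Sum>j<k. c j * d j) = v} \<subseteq> K \<rightarrow>\<^sub>E UNIV"
      by auto
    show "g ` (K \<rightarrow>\<^sub>E UNIV) \<subseteq> {c \<in> msgs k. (\<Sum>j<k. c j * d j) = v}"
    proof
      fix y assume "y \<in> g ` (K \<rightarrow>\<^sub>E UNIV)"
      then obtain c' where c': "c' \<in> K \<rightarrow>\<^sub>E UNIV" "y = g c'" by auto
      have "y \<in> msgs k" using c' j0 by (auto simp: msgs_def g_def K_def PiE_def extensional_def)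
      moreover have "(\<Sum>j<k. y j * d j) = v"
      proof -
        have "(\<Sum>j\<in>K. y j * d j) = (\<Sum>j\<in>K. c' j * d j)"
          using c' by (intro sum.cong) (auto simp: g_def K_def)
        then show ?thesis using sum_remove_j0[OF j0(1), of y d] j0(2) c'(2)
          by (simp add: K_def[symmetric]) (simp add: g_def)
      qed
      ultimately show "y \<in> {c \<in> msgs k. (\<Sum>j<k. c j * d j) = v}" by simp
    qed
  qed
  have "card K = k - 1" using j0 by (simp add: K_def)
  then show ?thesis using bij_betw_same_card[OF bij] by (simp add: card_PiE K_def)
qed

lemma finite_msgs: "finite (msgs k :: (nat \<Rightarrow> 'f::finite) set)"
  unfolding msgs_def by (simp add: finite_PiE)

lemma col_sum:
  fixes d :: "nat \<Rightarrow> 'f::{field,finite}" and h :: "'f \<Rightarrow> real"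
  assumes j0: "j0 < k" "d j0 \<noteq> 0"
  shows "(\<Sum>c\<in>msgs k. h (\<Sum>j<k. c j * d j)) = real CARD('f) ^ (k - 1) * (\<Sum>v\<in>UNIV. h v)"
proof -
  have "(\<Sum>c\<in>msgs k. h (\<Sum>j<k. c j * d j))
      = (\<Sum>v\<in>UNIV. \<Sum>c\<in>{c \<in> msgs k. (\<Sum>j<k. c j * d j) = v}. h (\<Sum>j<k. c j * d j))"
    by (rule sum.group[symmetric]) (auto simp: finite_msgs)
  also have "\<dots> = (\<Sum>v\<in>UNIV. real CARD('f) ^ (k - 1) * h v)"
    by (intro sum.cong refl) (simp add: col_count[of j0 k d, OF j0])
  finally show ?thesis by (simp add: sum_distrib_left)
qed


lemma card_genmats: "card (genmats k n :: (nat \<times> nat \<Rightarrow> 'f::finite) set) = CARD('f) ^ (k * n)"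
  unfolding genmats_def by (simp add: card_PiE card_cartesian_product)

lemma finite_genmats: "finite (genmats k n :: (nat \<times> nat \<Rightarrow> 'f::finite) set)"
  unfolding genmats_def by (simp add: finite_PiE)

lemma gen_avg:
  fixes d :: "nat \<Rightarrow> 'f::{field,finite}" and h :: "'f \<Rightarrow> real"
  assumes j0: "j0 < k" "d j0 \<noteq> 0" and S: "S \<subseteq> {..<n}"
  shows "(\<Sum>G\<in>genmats k n. \<Prod>r\<in>S. h (\<Sum>j<k. G (j, r) * d j))
       = real (card (genmats k n :: (nat \<times> nat \<Rightarrow> 'f) set)) * ((\<Sum>v\<in>UNIV. h v) / real CARD('f)) ^ card S"
proof -
  define \<phi> where "\<phi> G = (\<lambda>r\<in>{..<n}. \<lambda>j\<in>{..<k}. G (j, r))" for G :: "nat \<times> nat \<Rightarrow> 'f"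
  define \<psi> where "\<psi> C = (\<lambda>p\<in>{..<k}\<times>{..<n}. C (snd p) (fst p))" for C :: "nat \<Rightarrow> nat \<Rightarrow> 'f"
  define H where "H r c = (if r \<in> S then h (\<Sum>j<k. c j * d j) else 1)" for r and c :: "nat \<Rightarrow> 'f"
  define q where "q = real CARD('f)"
  have bij: "bij_betw \<phi> (genmats k n) (PiE {..<n} (\<lambda>_. msgs k))"
  proof (rule bij_betw_byWitness[where f'=\<psi>])
    show "\<forall>a\<in>genmats k n. \<psi> (\<phi> a) = a"
      by (auto simp: \<phi>_def \<psi>_def genmats_def PiE_def extensional_def fun_eq_iff)
    show "\<forall>a\<in>{..<n} \<rightarrow>\<^sub>E msgs k. \<phi> (\<psi> a) = a"
    proof
      fix C :: "nat \<Rightarrow> nat \<Rightarrow> 'f" assume C: "C \<in> {..<n} \<rightarrow>\<^sub>E msgs k"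
      show "\<phi> (\<psi> C) = C"
      proof (rule ext)
        fix r show "\<phi> (\<psi> C) r = C r"
        proof (cases "r < n")
          case True
          then have "C r \<in> msgs k" using C by auto
          then have "C r \<in> extensional {..<k}" by (simp add: msgs_def PiE_def)
          then show ?thesis using True by (auto simp: \<phi>_def \<psi>_def extensional_def fun_eq_iff)
        next
          case False
          then show ?thesis using C by (auto simp: \<phi>_def PiE_def extensional_def)
        qed
      qed
    qed
    show "\<phi> ` genmats k n \<subseteq> {..<n} \<rightarrow>\<^sub>E msgs k"
      by (auto simp: \<phi>_def msgs_def PiE_def extensional_def)
    show "\<psi> ` ({..<n} \<rightarrow>\<^sub>E msgs k) \<subseteq> genmats k n"
      by (auto simp: \<psi>_def genmats_def)
  qed
  have "(\<Sum>G\<in>genmats k n. \<Prod>r\<in>S. h (\<Sum>j<k. G (j, r) * d j))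
      = (\<Sum>G\<in>genmats k n. \<Prod>r<n. H r (\<phi> G r))"
  proof (intro sum.cong refl)
    fix G :: "nat \<times> nat \<Rightarrow> 'f" assume "G \<in> genmats k n"
    have "(\<Prod>r<n. H r (\<phi> G r)) = (\<Prod>r<n. if r \<in> S then h (\<Sum>j<k. G (j, r) * d j) else 1)"
      by (intro prod.cong refl) (auto simp: H_def \<phi>_def)
    also have "\<dots> = (\<Prod>r\<in>{..<n} \<inter> S. h (\<Sum>j<k. G (j, r) * d j))"
      by (rule prod.inter_restrict[symmetric]) simp
    also have "{..<n} \<inter> S = S" using S by auto
    finally show "(\<Prod>r\<in>S. h (\<Sum>j<k. G (j, r) * d j)) = (\<Prod>r<n. H r (\<phi> G r))" by simp
  qed
  also have "\<dots> = (\<Sum>C\<in>PiE {..<n} (\<lambda>_. msgs k). \<Prod>r<n. H r (C r))"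
    by (rule sum.reindex_bij_betw[OF bij])
  also have "\<dots> = (\<Prod>r<n. \<Sum>c\<in>msgs k. H r c)"
    by (rule prod_sum_PiE[symmetric]) (auto simp: finite_msgs)
  also have "\<dots> = (\<Prod>r<n. if r \<in> S then q ^ (k - 1) * (\<Sum>v\<in>UNIV. h v) else q ^ k)"
  proof (intro prod.cong refl)
    fix r
    have "card (msgs k :: (nat \<Rightarrow> 'f) set) = CARD('f) ^ k" by (simp add: msgs_def card_PiE)
    then show "(\<Sum>c\<in>msgs k. H r c) = (if r \<in> S then q ^ (k - 1) * (\<Sum>v\<in>UNIV. h v) else q ^ k)"
      using col_sum[of j0 k d h, OF j0] by (auto simp: H_def q_def)
  qed
  also have "\<dots> = (q ^ (k - 1) * (\<Sum>v\<in>UNIV. h v)) ^ card S * (q ^ k) ^ (n - card S)"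
  proof -
    have "{..<n} \<inter> {x. x \<in> S} = S" using S by auto
    moreover have "{..<n} \<inter> - {x. x \<in> S} = {..<n} - S" by auto
    moreover have "card ({..<n} - S) = n - card S" using S by (simp add: card_Diff_subset finite_subset)
    ultimately show ?thesis by (simp add: prod.If_cases)
  qed
  also have "\<dots> = q ^ (k * n) * ((\<Sum>v\<in>UNIV. h v) / q) ^ card S"
  proof -
    have q0: "q > 0" by (simp add: q_def)
    have cS: "card S \<le> n" using S by (metis card_lessThan card_mono finite_lessThan)
    obtain k' where k': "k = Suc k'" using j0 by (cases k) auto
    have "q ^ (k * n) = (q ^ k) ^ card S * (q ^ k) ^ (n - card S)"
    proof -
      have e: "k * n = k * card S + k * (n - card S)" using cS
        by (metis add_mult_distrib2 le_add_diff_inverse)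
      show ?thesis by (simp only: e power_add power_mult)
    qed
    moreover have "q ^ k * ((\<Sum>v\<in>UNIV. h v) / q) = q ^ (k - 1) * (\<Sum>v\<in>UNIV. h v)"
      using q0 k' by simp
    ultimately show ?thesis
      by (simp add: power_mult_distrib[symmetric] mult.assoc mult.commute mult.left_commute)
  qed
  finally show ?thesis by (simp add: card_genmats q_def)
qed


lemma limit_part:
  fixes \<epsilon> \<beta> :: real
  assumes "\<epsilon> > 0" "\<beta> > 1"
  shows "((\<lambda>N::nat. exp (- 2 * real N * \<epsilon>\<^sup>2)
           + 2 powr (real N - real N * \<epsilon> * (\<beta> - 1) * log 2 (real N))) \<longlonglongrightarrow> 0)"
proof -
  define a where "a = \<epsilon> * (\<beta> - 1)"
  have a: "a > 0" using assms by (simp add: a_def)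
  have e: "\<epsilon>\<^sup>2 > 0" using assms by simp
  have "((\<lambda>N::nat. exp (- 2 * real N * \<epsilon>\<^sup>2)
           + 2 powr (real N - a * (real N * log 2 (real N)))) \<longlonglongrightarrow> 0)"
    using a e by real_asymp
  then show ?thesis by (simp add: a_def mult.assoc mult.left_commute)
qed


lemma nonerased_perm:
  assumes "\<sigma> permutes {..<n}" "length Y = n"
  shows "nonerased (permute_rows n \<sigma> Y) = nonerased Y"
proof -
  have "set (permute_rows n \<sigma> Y) = (\<lambda>j. Y ! \<sigma> j) ` {..<n}"
    by (auto simp: permute_rows_def)
  also have "\<dots> = (\<lambda>i. Y ! i) ` (\<sigma> ` {..<n})" by (simp add: image_image)
  also have "\<sigma> ` {..<n} = {..<n}" using assms(1) by (rule permutes_image)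
  also have "(\<lambda>i. Y ! i) ` {..<n} = set Y" using assms(2) by (auto simp: in_set_conv_nth)
  finally show ?thesis by (simp add: nonerased_def)
qed

lemma decode_nonerased:
  assumes "nonerased Z = nonerased Y"
  shows "decode k n t bexp \<alpha> G Z = decode k n t bexp \<alpha> G Y"
  using assms by (simp add: decode_def)

lemma err_split:
  fixes u1 :: "nat \<Rightarrow> 'f::field"
  assumes u1: "u1 \<in> msgs k" and fin: "finite (msgs k :: (nat \<Rightarrow> 'f) set)"
    and inj1: "inj_on (codeword k bexp \<alpha> G u1) {..<n}" and len: "length Y = n"
  shows "(if decode k n t bexp \<alpha> G Y \<noteq> Some u1 then 1 else 0::real)
    \<le> (if card {r\<in>{..<n}. Y!r = Some (codeword k bexp \<alpha> G u1 r)} < t then 1 else 0)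
       + (\<Sum>u\<in>msgs k - {u1}. if t \<le> card (rowset (codeword k bexp \<alpha> G u) n \<inter> nonerased Y) then 1 else 0)"
proof -
  let ?P = "\<lambda>u. u \<in> msgs k \<and> t \<le> card (rowset (codeword k bexp \<alpha> G u) n \<inter> nonerased Y)"
  have nn: "0 \<le> (\<Sum>u\<in>msgs k - {u1}. if t \<le> card (rowset (codeword k bexp \<alpha> G u) n \<inter> nonerased Y) then 1 else 0::real)"
    by (simp add: sum_nonneg)
  show ?thesis
  proof (cases "decode k n t bexp \<alpha> G Y \<noteq> Some u1")
    case False then show ?thesis using nn by simp
  next
    case True
    show ?thesis
    proof (cases "card {r\<in>{..<n}. Y!r = Some (codeword k bexp \<alpha> G u1 r)} < t")
      case True then show ?thesis using nn by simp
    next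
      case notA: False
      let ?X = "codeword k bexp \<alpha> G u1"
      have sub: "?X ` {r\<in>{..<n}. Y!r = Some (?X r)} \<subseteq> rowset ?X n \<inter> nonerased Y"
        using len by (auto simp: rowset_def nonerased_def) (metis nth_mem)
      have ci: "card (?X ` {r\<in>{..<n}. Y!r = Some (?X r)}) = card {r\<in>{..<n}. Y!r = Some (?X r)}"
        by (rule card_image) (rule inj_on_subset[OF inj1], auto)
      have fr: "finite (rowset ?X n \<inter> nonerased Y)" by (simp add: rowset_def)
      have "card (?X ` {r\<in>{..<n}. Y!r = Some (?X r)}) \<le> card (rowset ?X n \<inter> nonerased Y)"
        by (rule card_mono[OF fr sub])
      then have "t \<le> card (rowset ?X n \<inter> nonerased Y)"
        using notA ci by linarith
      then have Pu1: "?P u1" using u1 by simp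
      have "\<exists>u\<in>msgs k - {u1}. ?P u"
      proof (rule ccontr)
        assume "\<not> ?thesis"
        then have "\<And>u. ?P u \<Longrightarrow> u = u1" by auto
        then have ex1: "\<exists>!u. ?P u" using Pu1 by blast
        have "(THE u. ?P u) = u1" using the1_equality[of ?P u1] ex1 Pu1 by blast
        then have "decode k n t bexp \<alpha> G Y = Some u1" using ex1 by (simp add: decode_def)
        with \<open>decode k n t bexp \<alpha> G Y \<noteq> Some u1\<close> show False by simp
      qed
      then obtain u where u: "u \<in> msgs k - {u1}" "?P u" by blast
      have "(1::real) \<le> (\<Sum>u\<in>msgs k - {u1}. if t \<le> card (rowset (codeword k bexp \<alpha> G u) n \<inter> nonerased Y) then 1 else 0)"
        using member_le_sum[OF u(1), of "\<lambda>u. if t \<le> card (rowset (codeword k bexp \<alpha> G u) n \<inter> nonerased Y) then 1 else 0::real"] u fin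
        by simp
      then show ?thesis using notA by simp
    qed
  qed
qed


lemma partB_u:
  fixes bexp :: "'f::{field,finite} \<Rightarrow> bool list" and u u1 :: "nat \<Rightarrow> 'f"
    and \<alpha> :: "nat \<Rightarrow> bool list"
  assumes probs: "pc \<ge> 0" "pe \<ge> 0" "ps \<ge> 0" "pc + pe + ps = 1"
    and l1: "l \<ge> 1" and ln: "(2::nat) ^ l = CARD('f) * n" and npos: "n > 0"
    and len: "\<And>G u r. r < n \<Longrightarrow> length (codeword k bexp \<alpha> G u r) = l"
    and eqv: "\<And>G u u' r r'. r < n \<Longrightarrow> r' < n \<Longrightarrow>
       (codeword k bexp \<alpha> G u r = codeword k bexp \<alpha> G u' r')
       = (r = r' \<and> (\<Sum>j<k. G (j, r) * u j) = (\<Sum>j<k. G (j, r) * u' j))"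
    and u: "u \<in> msgs k" and u1: "u1 \<in> msgs k" and ne: "u \<noteq> u1"
  shows "(1 / real (card (genmats k n :: (nat \<times> nat \<Rightarrow> 'f) set))) *
      (\<Sum>G\<in>genmats k n. \<Sum>Y\<in>outputs l n. channel1 l n pc pe ps (codeword k bexp \<alpha> G u1) Y
         * (if t \<le> card (rowset (codeword k bexp \<alpha> G u) n \<inter> nonerased Y) then 1 else 0))
     \<le> 2 ^ n * (1 / real CARD('f)) ^ t"
proof -
  define c where "c = ps / (2 ^ l - 1)"
  define h where "h v = c * real n + (if v = 0 then pc - c else 0)" for v :: 'f
  define D where "D G r = (\<Sum>j<k. G (j, r) * (u j - u1 j))" for G :: "nat \<times> nat \<Rightarrow> 'f" and r
  define T where "T = {S. S \<subseteq> {..<n} \<and> card S = t}"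
  define q where "q = real CARD('f)"
  define NG where "NG = real (card (genmats k n :: (nat \<times> nat \<Rightarrow> 'f) set))"
  have NG0: "NG > 0" unfolding NG_def by (simp add: card_genmats)
  have q0: "q > 0" by (simp add: q_def)
  have finT: "finite T" unfolding T_def by (rule finite_subset[of _ "Pow {..<n}"]) auto
  obtain j0 where j0: "j0 < k" "u j0 - u1 j0 \<noteq> 0"
  proof -
    obtain j where "u j \<noteq> u1 j" using ne by auto
    moreover have "j < k" using \<open>u j \<noteq> u1 j\<close> u u1
      by (auto simp: msgs_def PiE_def extensional_def) (metis not_less)
    ultimately show ?thesis using that by auto
  qed
  have rowval: "(\<Sum>e\<in>rowset (codeword k bexp \<alpha> G u) n. row_trans l pc pe ps (codeword k bexp \<alpha> G u1 r) (Some e))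
      = h (D G r)" if r: "r < n" for G r
  proof -
    let ?R = "rowset (codeword k bexp \<alpha> G u) n" and ?x = "codeword k bexp \<alpha> G u1 r"
    have Rsub: "?R \<subseteq> {e. length e = l}" using len by (auto simp: rowset_def)
    have finR: "finite ?R" by (simp add: rowset_def)
    have inj: "inj_on (codeword k bexp \<alpha> G u) {..<n}" using eqv by (auto simp: inj_on_def)
    have cR: "card ?R = n" unfolding rowset_def using card_image[OF inj] by simp
    have mem: "(?x \<in> ?R) = (D G r = 0)"
    proof -
      have "(?x \<in> ?R) = (\<exists>r'<n. codeword k bexp \<alpha> G u r' = ?x)"
      proof
        assume "?x \<in> ?R" then show "\<exists>r'<n. codeword k bexp \<alpha> G u r' = ?x"
          by (auto simp: rowset_def)
      next
        assume "\<exists>r'<n. codeword k bexp \<alpha> G u r' = ?x"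
        then obtain r' where "r' < n" "codeword k bexp \<alpha> G u r' = ?x" by blast
        then show "?x \<in> ?R" unfolding rowset_def by (intro rev_image_eqI[of r']) auto
      qed
      also have "\<dots> = ((\<Sum>j<k. G (j, r) * u j) = (\<Sum>j<k. G (j, r) * u1 j))"
        using eqv r by auto
      also have "\<dots> = (D G r = 0)"
        by (simp add: D_def right_diff_distrib sum_subtractf)
      finally show ?thesis .
    qed
    have "(\<Sum>e\<in>?R. row_trans l pc pe ps ?x (Some e)) = (if ?x \<in> ?R then pc else 0) + c * real (card (?R - {?x}))"
      using row_sum_Some[OF Rsub finR] by (simp add: c_def)
    also have "\<dots> = h (D G r)"
    proof (cases "?x \<in> ?R")
      case True
      then have "card (?R - {?x}) = n - 1" using cR finR by simp
      then show ?thesis using True mem npos by (simp add: h_def of_nat_diff algebra_simps)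
    next
      case False
      then have "card (?R - {?x}) = n" using cR by simp
      then show ?thesis using False mem by (simp add: h_def)
    qed
    finally show ?thesis .
  qed
  have sumh: "(\<Sum>v\<in>UNIV. h v) = pc + ps"
  proof -
    have s1: "(\<Sum>v\<in>UNIV. h v) = q * (c * real n) + (pc - c)"
      by (simp add: h_def sum.distrib q_def)
    have "real (2 ^ l :: nat) = real (CARD('f) * n)" using ln by simp
    then have qn: "q * real n = 2 ^ l" by (simp add: q_def)
    have "(2::real) ^ l \<ge> 2" using l1 by (metis power_one_right power_increasing one_le_numeral)
    then have nz: "(2::real) ^ l - 1 \<noteq> 0" by simp
    have "q * (c * real n) + (pc - c) = pc + c * (2 ^ l - 1)"
      using qn by (simp add: algebra_simps)
    also have "c * (2 ^ l - 1) = ps" using nz by (simp add: c_def)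
    finally show ?thesis using s1 by simp
  qed
  have hnn: "0 \<le> pc + ps" using probs by simp
  have "(\<Sum>G\<in>genmats k n. \<Sum>Y\<in>outputs l n. channel1 l n pc pe ps (codeword k bexp \<alpha> G u1) Y
         * (if t \<le> card (rowset (codeword k bexp \<alpha> G u) n \<inter> nonerased Y) then 1 else 0))
      \<le> (\<Sum>G\<in>genmats k n. \<Sum>S\<in>T. \<Prod>r\<in>S. h (D G r))"
  proof (rule sum_mono)
    fix G :: "nat \<times> nat \<Rightarrow> 'f" assume "G \<in> genmats k n"
    have "(\<Sum>Y\<in>outputs l n. channel1 l n pc pe ps (codeword k bexp \<alpha> G u1) Y
         * (if t \<le> card (rowset (codeword k bexp \<alpha> G u) n \<inter> nonerased Y) then 1 else 0))
       \<le> (\<Sum>S\<in>T. \<Prod>r\<in>S. \<Sum>e\<in>rowset (codeword k bexp \<alpha> G u) n. row_trans l pc pe ps (codeword k bexp \<alpha> G u1 r) (Some e))"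
      unfolding T_def
      by (rule partB_Y[OF probs l1]) (auto simp: len rowset_def)
    also have "\<dots> = (\<Sum>S\<in>T. \<Prod>r\<in>S. h (D G r))"
      by (intro sum.cong refl prod.cong) (auto simp: T_def rowval)
    finally show "(\<Sum>Y\<in>outputs l n. channel1 l n pc pe ps (codeword k bexp \<alpha> G u1) Y
         * (if t \<le> card (rowset (codeword k bexp \<alpha> G u) n \<inter> nonerased Y) then 1 else 0))
       \<le> (\<Sum>S\<in>T. \<Prod>r\<in>S. h (D G r))" .
  qed
  also have "\<dots> = (\<Sum>S\<in>T. \<Sum>G\<in>genmats k n. \<Prod>r\<in>S. h (D G r))"
    by (rule sum.swap)
  also have "\<dots> = (\<Sum>S\<in>T. NG * ((pc + ps) / q) ^ t)"
  proof (intro sum.cong refl)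
    fix S assume S: "S \<in> T"
    then have "S \<subseteq> {..<n}" "card S = t" by (auto simp: T_def)
    then show "(\<Sum>G\<in>genmats k n. \<Prod>r\<in>S. h (D G r)) = NG * ((pc + ps) / q) ^ t"
      using gen_avg[of j0 k "\<lambda>j. u j - u1 j" S n h] j0 sumh
      by (simp add: D_def NG_def q_def)
  qed
  also have "\<dots> = real (n choose t) * NG * ((pc + ps) / q) ^ t"
  proof -
    have "card T = n choose t" unfolding T_def using n_subsets[of "{..<n}" t] by simp
    then show ?thesis by simp
  qed
  also have "\<dots> \<le> 2 ^ n * NG * (1 / q) ^ t"
  proof (intro mult_mono)
    show "real (n choose t) \<le> 2 ^ n"
      using binomial_le_pow2[of n t] by (metis of_nat_le_iff of_nat_numeral of_nat_power)
    show "((pc + ps) / q) ^ t \<le> (1 / q) ^ t"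
      using hnn probs q0 by (intro power_mono divide_right_mono) auto
  qed (use NG0 q0 hnn in auto)
  finally have "(\<Sum>G\<in>genmats k n. \<Sum>Y\<in>outputs l n. channel1 l n pc pe ps (codeword k bexp \<alpha> G u1) Y
         * (if t \<le> card (rowset (codeword k bexp \<alpha> G u) n \<inter> nonerased Y) then 1 else 0))
      \<le> 2 ^ n * NG * (1 / q) ^ t" .
  then show ?thesis using NG0 unfolding NG_def[symmetric] q_def[symmetric]
    by (simp add: field_simps)
qed

theorem mainTheorem6:
  fixes bexp :: "'f::{field,finite} \<Rightarrow> bool list"
    and \<alpha> :: "nat \<Rightarrow> bool list"
    and l m n k t w :: nat
    and \<beta> \<epsilon> pc pe ps :: real
    and u1 :: "nat \<Rightarrow> 'f"
  assumes probs: "pc \<ge> 0" "pe \<ge> 0" "ps \<ge> 0" "pc + pe + ps = 1"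
    and n_def: "n = 2 ^ m"
    and beta_def: "\<beta> = real l / log 2 (real n)"
    and beta_gt: "\<beta> > 1"
    and eps: "\<epsilon> > 0" "pc - 2 * \<epsilon> > 0"
    and k_def: "real k = real n * (pc - 2 * \<epsilon>)"
    and t_def: "real t = real n * (pc - \<epsilon>)"
    and w_def: "w = l - m"
    and field_card: "CARD('f) = 2 ^ w"
    and bexp_bij: "bij_betw bexp (UNIV :: 'f set) {xs. length xs = w}"
    and alpha_bij: "bij_betw \<alpha> {..<n} {xs. length xs = m}"
    and u1: "u1 \<in> msgs k"
  shows "(\<Sum>G\<in>genmats k n. \<Sum>Y\<in>outputs l n. \<Sum>\<sigma>\<in>{\<sigma>. \<sigma> permutes {..<n}}.
            (1 / real (card (genmats k n :: (nat \<times> nat \<Rightarrow> 'f) set)))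
            * channel1 l n pc pe ps (codeword k bexp \<alpha> G u1) Y
            * (1 / real (card {\<sigma>. \<sigma> permutes {..<n}}))
            * (if decode k n t bexp \<alpha> G (permute_rows n \<sigma> Y) \<noteq> Some u1 then 1 else 0))
         \<le> exp (- 2 * real n * \<epsilon>\<^sup>2) + 2 powr (real n - real n * \<epsilon> * real w)
     \<and> 2 powr (real n - real n * \<epsilon> * real w)
         = 2 powr (real n - real n * \<epsilon> * (\<beta> - 1) * log 2 (real n))
     \<and> ((\<lambda>N::nat. exp (- 2 * real N * \<epsilon>\<^sup>2)
           + 2 powr (real N - real N * \<epsilon> * (\<beta> - 1) * log 2 (real N))) \<longlonglongrightarrow> 0)"
proof -
  have pc1: "pc \<le> 1" using probs by linarith
  have m1: "m \<ge> 1"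
  proof (rule ccontr)
    assume "\<not> m \<ge> 1" then have "m = 0" by simp
    then have "n = 1" using n_def by simp
    then have "\<beta> = 0" using beta_def by simp
    then show False using beta_gt by simp
  qed
  have npos: "n > 0" using n_def by simp
  have logn: "log 2 (real n) = real m" using n_def by (simp add: log_nat_power)
  have lm: "l > m"
  proof -
    have "real l / real m > 1" using beta_gt beta_def logn by simp
    then have "real l > real m" using m1 by (simp add: field_simps)
    then show ?thesis by simp
  qed
  have lwm: "l = w + m" using lm w_def by simp
  have l1: "l \<ge> 1" using lm by simp
  have ln: "(2::nat) ^ l = CARD('f) * n" using lwm field_card n_def by (simp add: power_add)
  have blen: "length (bexp x) = w" for x
    using bij_betw_imp_surj_on[OF bexp_bij] by auto
  have alen: "r < n \<Longrightarrow> length (\<alpha> r) = m" for r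
    using bij_betw_imp_surj_on[OF alpha_bij] by auto
  have len: "\<And>G u r. r < n \<Longrightarrow> length (codeword k bexp \<alpha> G u r) = l"
    using blen alen lwm by (simp add: codeword_def)
  have binj: "inj bexp" using bexp_bij by (simp add: bij_betw_def)
  have ainj: "inj_on \<alpha> {..<n}" using alpha_bij by (simp add: bij_betw_def)
  have eqv: "\<And>G u u' r r'. r < n \<Longrightarrow> r' < n \<Longrightarrow>
       (codeword k bexp \<alpha> G u r = codeword k bexp \<alpha> G u' r')
       = (r = r' \<and> (\<Sum>j<k. G (j, r) * u j) = (\<Sum>j<k. G (j, r) * u' j))"
  proof -
    fix G u u' r r' assume r: "r < n" "r' < n"
    show "(codeword k bexp \<alpha> G u r = codeword k bexp \<alpha> G u' r')
       = (r = r' \<and> (\<Sum>j<k. G (j, r) * u j) = (\<Sum>j<k. G (j, r) * u' j))"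
    proof
      assume "codeword k bexp \<alpha> G u r = codeword k bexp \<alpha> G u' r'"
      then have "bexp (\<Sum>j<k. G (j, r) * u j) = bexp (\<Sum>j<k. G (j, r') * u' j) \<and> \<alpha> r = \<alpha> r'"
        unfolding codeword_def by (subst (asm) append_eq_append_conv) (simp_all add: blen)
      then show "r = r' \<and> (\<Sum>j<k. G (j, r) * u j) = (\<Sum>j<k. G (j, r) * u' j)"
        using binj ainj r by (auto simp: inj_on_def)
    qed (auto simp: codeword_def)
  qed
  have kpos: "k > 0"
  proof -
    have "real k > 0" using k_def npos eps by simp
    then show ?thesis by simp
  qed
  have tk: "real t - real k = real n * \<epsilon>" using t_def k_def by (simp add: algebra_simps)
  define Gm where "Gm = (genmats k n :: (nat \<times> nat \<Rightarrow> 'f) set)"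
  define NG where "NG = real (card Gm)"
  define Pm where "Pm = {\<sigma>. \<sigma> permutes {..<n}}"
  define NP where "NP = real (card Pm)"
  define q where "q = real CARD('f)"
  define E where "E G Y = (if decode k n t bexp \<alpha> G Y \<noteq> Some u1 then 1 else 0::real)" for G Y
  define A where "A G Y = (if card {r\<in>{..<n}. Y!r = Some (codeword k bexp \<alpha> G u1 r)} < t then 1 else 0::real)" for G Y
  define B where "B u G Y = (if t \<le> card (rowset (codeword k bexp \<alpha> G u) n \<inter> nonerased Y) then 1 else 0::real)" for u G Y
  define ch where "ch G Y = channel1 l n pc pe ps (codeword k bexp \<alpha> G u1) Y" for G Y
  have NG0: "NG > 0" by (simp add: NG_def Gm_def card_genmats)
  have NP0: "NP > 0" by (simp add: NP_def Pm_def card_permutations)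
  have finPm: "finite Pm" by (simp add: Pm_def finite_permutations)
  have q0: "q > 0" by (simp add: q_def)
  have rt_nn: "row_trans l pc pe ps x y \<ge> 0" for x y
  proof -
    have "(2::real) ^ l \<ge> 1" by simp
    then show ?thesis using probs by (auto simp: row_trans_def split: option.split)
  qed
  have ch_nn: "ch G Y \<ge> 0" for G Y
    unfolding ch_def channel1_def by (intro prod_nonneg) (simp add: rt_nn)
  have inner: "(\<Sum>\<sigma>\<in>Pm. (1 / NG) * ch G Y * (1 / NP)
            * (if decode k n t bexp \<alpha> G (permute_rows n \<sigma> Y) \<noteq> Some u1 then 1 else 0))
        = (1 / NG) * (ch G Y * E G Y)" if Y: "Y \<in> outputs l n" for G Y
  proof -
    have lY: "length Y = n" using Y by (simp add: outputs_def)
    have "(\<Sum>\<sigma>\<in>Pm. (1 / NG) * ch G Y * (1 / NP)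
          * (if decode k n t bexp \<alpha> G (permute_rows n \<sigma> Y) \<noteq> Some u1 then 1 else 0))
        = (\<Sum>\<sigma>\<in>Pm. (1 / NG) * ch G Y * (1 / NP) * E G Y)"
    proof (intro sum.cong refl)
      fix \<sigma> assume "\<sigma> \<in> Pm"
      then have "decode k n t bexp \<alpha> G (permute_rows n \<sigma> Y) = decode k n t bexp \<alpha> G Y"
        using lY by (intro decode_nonerased nonerased_perm) (auto simp: Pm_def)
      then show "(1 / NG) * ch G Y * (1 / NP)
          * (if decode k n t bexp \<alpha> G (permute_rows n \<sigma> Y) \<noteq> Some u1 then 1 else 0)
         = (1 / NG) * ch G Y * (1 / NP) * E G Y" by (simp add: E_def)
    qed
    also have "\<dots> = NP * ((1 / NG) * ch G Y * (1 / NP) * E G Y)" by (simp add: NP_def)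
    also have "\<dots> = (1 / NG) * (ch G Y * E G Y)" using NP0 by simp
    finally show ?thesis .
  qed
  have step1: "(\<Sum>G\<in>Gm. \<Sum>Y\<in>outputs l n. \<Sum>\<sigma>\<in>Pm. (1 / NG) * ch G Y * (1 / NP)
            * (if decode k n t bexp \<alpha> G (permute_rows n \<sigma> Y) \<noteq> Some u1 then 1 else 0))
      = (1 / NG) * (\<Sum>G\<in>Gm. \<Sum>Y\<in>outputs l n. ch G Y * E G Y)"
  proof -
    have "(\<Sum>G\<in>Gm. \<Sum>Y\<in>outputs l n. \<Sum>\<sigma>\<in>Pm. (1 / NG) * ch G Y * (1 / NP)
            * (if decode k n t bexp \<alpha> G (permute_rows n \<sigma> Y) \<noteq> Some u1 then 1 else 0))
        = (\<Sum>G\<in>Gm. \<Sum>Y\<in>outputs l n. (1 / NG) * (ch G Y * E G Y))"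
      by (intro sum.cong refl inner)
    also have "\<dots> = (1 / NG) * (\<Sum>G\<in>Gm. \<Sum>Y\<in>outputs l n. ch G Y * E G Y)"
      by (simp only: sum_distrib_left)
    finally show ?thesis .
  qed
  have step2: "(\<Sum>G\<in>Gm. \<Sum>Y\<in>outputs l n. ch G Y * E G Y)
      \<le> (\<Sum>G\<in>Gm. \<Sum>Y\<in>outputs l n. ch G Y * A G Y)
         + (\<Sum>u\<in>msgs k - {u1}. \<Sum>G\<in>Gm. \<Sum>Y\<in>outputs l n. ch G Y * B u G Y)"
  proof -
    have "(\<Sum>G\<in>Gm. \<Sum>Y\<in>outputs l n. ch G Y * E G Y)
        \<le> (\<Sum>G\<in>Gm. \<Sum>Y\<in>outputs l n. ch G Y * (A G Y + (\<Sum>u\<in>msgs k - {u1}. B u G Y)))"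
    proof (intro sum_mono mult_left_mono ch_nn)
      fix G Y assume Y: "Y \<in> outputs l n"
      have inj1: "inj_on (codeword k bexp \<alpha> G u1) {..<n}" using eqv by (auto simp: inj_on_def)
      show "E G Y \<le> A G Y + (\<Sum>u\<in>msgs k - {u1}. B u G Y)"
        unfolding E_def A_def B_def
        by (rule err_split[OF u1 finite_msgs inj1]) (use Y in \<open>simp add: outputs_def\<close>)
    qed
    also have "\<dots> = (\<Sum>G\<in>Gm. \<Sum>Y\<in>outputs l n. ch G Y * A G Y)
         + (\<Sum>G\<in>Gm. \<Sum>Y\<in>outputs l n. \<Sum>u\<in>msgs k - {u1}. ch G Y * B u G Y)"
      by (simp add: distrib_left sum.distrib sum_distrib_left)
    also have "(\<Sum>G\<in>Gm. \<Sum>Y\<in>outputs l n. \<Sum>u\<in>msgs k - {u1}. ch G Y * B u G Y)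
        = (\<Sum>u\<in>msgs k - {u1}. \<Sum>G\<in>Gm. \<Sum>Y\<in>outputs l n. ch G Y * B u G Y)"
    proof -
      have "(\<Sum>G\<in>Gm. \<Sum>Y\<in>outputs l n. \<Sum>u\<in>msgs k - {u1}. ch G Y * B u G Y)
          = (\<Sum>G\<in>Gm. \<Sum>u\<in>msgs k - {u1}. \<Sum>Y\<in>outputs l n. ch G Y * B u G Y)"
        by (intro sum.cong refl sum.swap)
      also have "\<dots> = (\<Sum>u\<in>msgs k - {u1}. \<Sum>G\<in>Gm. \<Sum>Y\<in>outputs l n. ch G Y * B u G Y)"
        by (rule sum.swap)
      finally show ?thesis .
    qed
    finally show ?thesis .
  qed
  have partA': "(\<Sum>G\<in>Gm. \<Sum>Y\<in>outputs l n. ch G Y * A G Y) \<le> NG * exp (- 2 * real n * \<epsilon>\<^sup>2)"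
  proof -
    have "(\<Sum>G\<in>Gm. \<Sum>Y\<in>outputs l n. ch G Y * A G Y) \<le> (\<Sum>G\<in>Gm. exp (- 2 * real n * \<epsilon>\<^sup>2))"
    proof (rule sum_mono)
      fix G show "(\<Sum>Y\<in>outputs l n. ch G Y * A G Y) \<le> exp (- 2 * real n * \<epsilon>\<^sup>2)"
        unfolding ch_def A_def
        by (rule partA[OF probs l1 len npos eps(1) t_def])
    qed
    then show ?thesis by (simp add: NG_def)
  qed
  have partB': "(1 / NG) * (\<Sum>G\<in>Gm. \<Sum>Y\<in>outputs l n. ch G Y * B u G Y) \<le> 2 ^ n * (1 / q) ^ t"
    if u: "u \<in> msgs k - {u1}" for u
    unfolding NG_def Gm_def ch_def B_def q_def
    by (rule partB_u[OF probs l1 ln npos len eqv]) (use u u1 in auto)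
  have cardm: "real (card (msgs k - {u1} :: (nat \<Rightarrow> 'f) set)) \<le> q ^ k"
  proof -
    have "card (msgs k - {u1} :: (nat \<Rightarrow> 'f) set) \<le> card (msgs k :: (nat \<Rightarrow> 'f) set)"
      by (rule card_mono[OF finite_msgs]) auto
    also have "card (msgs k :: (nat \<Rightarrow> 'f) set) = CARD('f) ^ k" by (simp add: msgs_def card_PiE)
    finally show ?thesis by (simp add: q_def flip: of_nat_power)
  qed
  have main: "(1 / NG) * (\<Sum>G\<in>Gm. \<Sum>Y\<in>outputs l n. ch G Y * E G Y)
      \<le> exp (- 2 * real n * \<epsilon>\<^sup>2) + q ^ k * (2 ^ n * (1 / q) ^ t)"
  proof -
    have "(1 / NG) * (\<Sum>G\<in>Gm. \<Sum>Y\<in>outputs l n. ch G Y * E G Y)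
       \<le> (1 / NG) * (\<Sum>G\<in>Gm. \<Sum>Y\<in>outputs l n. ch G Y * A G Y)
         + (\<Sum>u\<in>msgs k - {u1}. (1 / NG) * (\<Sum>G\<in>Gm. \<Sum>Y\<in>outputs l n. ch G Y * B u G Y))"
      using mult_left_mono[OF step2, of "1 / NG"] NG0 by (simp add: distrib_left sum_distrib_left)
    also have "\<dots> \<le> exp (- 2 * real n * \<epsilon>\<^sup>2) + (\<Sum>u\<in>msgs k - {u1}. 2 ^ n * (1 / q) ^ t)"
    proof (rule add_mono)
      show "(1 / NG) * (\<Sum>G\<in>Gm. \<Sum>Y\<in>outputs l n. ch G Y * A G Y) \<le> exp (- 2 * real n * \<epsilon>\<^sup>2)"
        using partA' NG0 by (simp add: field_simps)
      show "(\<Sum>u\<in>msgs k - {u1}. (1 / NG) * (\<Sum>G\<in>Gm. \<Sum>Y\<in>outputs l n. ch G Y * B u G Y))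
          \<le> (\<Sum>u\<in>msgs k - {u1}. 2 ^ n * (1 / q) ^ t)"
        by (rule sum_mono) (rule partB')
    qed
    also have "\<dots> \<le> exp (- 2 * real n * \<epsilon>\<^sup>2) + q ^ k * (2 ^ n * (1 / q) ^ t)"
      using cardm q0 by (simp add: mult_right_mono)
    finally show ?thesis .
  qed
  have final: "q ^ k * (2 ^ n * (1 / q) ^ t) = 2 powr (real n - real n * \<epsilon> * real w)"
  proof -
    have qw: "q = 2 ^ w" using field_card by (simp add: q_def)
    have a: "q ^ k = 2 powr (real w * real k)"
    proof -
      have "q ^ k = (2::real) ^ (w * k)" using qw by (simp add: power_mult)
      also have "\<dots> = 2 powr (real (w * k))" by (rule powr_realpow[symmetric]) simp
      finally show ?thesis by simp
    qed
    have b: "(1 / q) ^ t = 2 powr (- (real w * real t))"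
    proof -
      have "(1 / q) ^ t = 1 / (2::real) ^ (w * t)" using qw by (simp add: power_mult power_one_over)
      also have "(2::real) ^ (w * t) = 2 powr (real (w * t))" by (rule powr_realpow[symmetric]) simp
      finally show ?thesis by (simp add: powr_minus_divide)
    qed
    have c: "(2::real) ^ n = 2 powr real n" by (rule powr_realpow[symmetric]) simp
    have "q ^ k * (2 ^ n * (1 / q) ^ t) = 2 powr (real w * real k) * (2 powr real n * 2 powr (- (real w * real t)))"
      by (simp only: a b c)
    also have "\<dots> = 2 powr (real w * real k + (real n + - (real w * real t)))"
      by (simp only: powr_add)
    also have "real w * real k + (real n + - (real w * real t)) = real n - real w * (real t - real k)"
      by (simp add: algebra_simps)
    also have "\<dots> = real n - real n * \<epsilon> * real w" using tk by simp
    finally show ?thesis .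
  qed
  have conj2: "2 powr (real n - real n * \<epsilon> * real w)
         = 2 powr (real n - real n * \<epsilon> * (\<beta> - 1) * log 2 (real n))"
  proof -
    have "(\<beta> - 1) * log 2 (real n) = real w"
      using beta_def logn m1 lwm by (simp add: field_simps)
    then show ?thesis by (simp add: mult.assoc)
  qed
  have "(\<Sum>G\<in>Gm. \<Sum>Y\<in>outputs l n. \<Sum>\<sigma>\<in>Pm. (1 / NG) * ch G Y * (1 / NP)
            * (if decode k n t bexp \<alpha> G (permute_rows n \<sigma> Y) \<noteq> Some u1 then 1 else 0))
      \<le> exp (- 2 * real n * \<epsilon>\<^sup>2) + 2 powr (real n - real n * \<epsilon> * real w)"
    using step1 main final by simp
  then have ineq: "(\<Sum>G\<in>genmats k n. \<Sum>Y\<in>outputs l n. \<Sum>\<sigma>\<in>{\<sigma>. \<sigma> permutes {..<n}}.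
            (1 / real (card (genmats k n :: (nat \<times> nat \<Rightarrow> 'f) set)))
            * channel1 l n pc pe ps (codeword k bexp \<alpha> G u1) Y
            * (1 / real (card {\<sigma>. \<sigma> permutes {..<n}}))
            * (if decode k n t bexp \<alpha> G (permute_rows n \<sigma> Y) \<noteq> Some u1 then 1 else 0))
         \<le> exp (- 2 * real n * \<epsilon>\<^sup>2) + 2 powr (real n - real n * \<epsilon> * real w)"
    unfolding Gm_def NG_def Pm_def NP_def ch_def .
  show ?thesis
    using ineq conj2 limit_part[OF eps(1) beta_gt] by blast
qed


end
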